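(* For every $d\ge 1$, the class of $d$-CBU graphs is strictly contained in the class of $(d+1)$-CBU graphs.
   Context: Let $e_1,\ldots,e_d$ be the standard basis of $\mathbb{R}^d$. For $d\ge 1$, a graph belongs to $d$-CBU if one can assign to each vertex an axis-parallel box (product of $d$ closed intervals of positive length) in $\mathbb{R}^d$ such that the boxes have pairwise disjoint interiors, two distinct vertices are adjacent iff their boxes intersect, and any two intersecting boxes intersect in a $(d-1)$-dimensional box orthogonal to $e_1$. *)

theory Defs
  imports Main "HOL-Library.Set_Idioms" Complex_Main
begin

text \<open>Points of R^d are represented as functions nat => real whose coordinates
  with index >= d vanish; coordinate 0 corresponds to the basis vector e_1.\<close>

definition cbox_d :: "nat \<Rightarrow> (nat \<Rightarrow> real) \<Rightarrow> (nat \<Rightarrow> real) \<Rightarrow> (nat \<Rightarrow> real) set" where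
  "cbox_d d a b = {x. (\<forall>i<d. a i \<le> x i \<and> x i \<le> b i) \<and> (\<forall>i\<ge>d. x i = 0)}"

definition obox_d :: "nat \<Rightarrow> (nat \<Rightarrow> real) \<Rightarrow> (nat \<Rightarrow> real) \<Rightarrow> (nat \<Rightarrow> real) set" where
  "obox_d d a b = {x. (\<forall>i<d. a i < x i \<and> x i < b i) \<and> (\<forall>i\<ge>d. x i = 0)}"

definition orth_facet_d :: "nat \<Rightarrow> (nat \<Rightarrow> real) set \<Rightarrow> bool" where
  "orth_facet_d d S \<longleftrightarrow> (\<exists>c a b. (\<forall>i\<in>{1..<d}. a i < b i) \<and>
     S = {x. x 0 = c \<and> (\<forall>i\<in>{1..<d}. a i \<le> x i \<and> x i \<le> b i) \<and> (\<forall>i\<ge>d. x i = 0)})"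

definition simple_graph :: "nat set \<Rightarrow> (nat \<Rightarrow> nat \<Rightarrow> bool) \<Rightarrow> bool" where
  "simple_graph V E \<longleftrightarrow> finite V \<and> (\<forall>u v. E u v \<longrightarrow> u \<in> V \<and> v \<in> V) \<and>
     (\<forall>u v. E u v \<longrightarrow> E v u) \<and> (\<forall>v. \<not> E v v)"

definition CBU :: "nat \<Rightarrow> nat set \<Rightarrow> (nat \<Rightarrow> nat \<Rightarrow> bool) \<Rightarrow> bool" where
  "CBU d V E \<longleftrightarrow> simple_graph V E \<and>
    (\<exists>a b :: nat \<Rightarrow> nat \<Rightarrow> real.
       (\<forall>v\<in>V. \<forall>i<d. a v i < b v i) \<and>
       (\<forall>u\<in>V. \<forall>v\<in>V. u \<noteq> v \<longrightarrow> obox_d d (a u) (b u) \<inter> obox_d d (a v) (b v) = {}) \<and>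
       (\<forall>u\<in>V. \<forall>v\<in>V. u \<noteq> v \<longrightarrow>
          (E u v \<longleftrightarrow> cbox_d d (a u) (b u) \<inter> cbox_d d (a v) (b v) \<noteq> {})) \<and>
       (\<forall>u\<in>V. \<forall>v\<in>V. u \<noteq> v \<longrightarrow> cbox_d d (a u) (b u) \<inter> cbox_d d (a v) (b v) \<noteq> {} \<longrightarrow>
          orth_facet_d d (cbox_d d (a u) (b u) \<inter> cbox_d d (a v) (b v))))"

end

theory Submission
  imports Defs
begin

lemma cbox_inter: "cbox_d d a1 b1 \<inter> cbox_d d a2 b2 = cbox_d d (\<lambda>i. max (a1 i) (a2 i)) (\<lambda>i. min (b1 i) (b2 i))"
  by (auto simp: cbox_d_def)

lemma obox_inter: "obox_d d a1 b1 \<inter> obox_d d a2 b2 = obox_d d (\<lambda>i. max (a1 i) (a2 i)) (\<lambda>i. min (b1 i) (b2 i))"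
  by (auto simp: obox_d_def)

lemma cbox_ne: "cbox_d d lo hi \<noteq> {} \<longleftrightarrow> (\<forall>i<d. lo i \<le> hi i)"
proof
  assume "cbox_d d lo hi \<noteq> {}"
  then obtain x where "x \<in> cbox_d d lo hi" by blast
  then show "\<forall>i<d. lo i \<le> hi i" by (force simp: cbox_d_def)
next
  assume h: "\<forall>i<d. lo i \<le> hi i"
  have "(\<lambda>i. if i < d then lo i else 0) \<in> cbox_d d lo hi" using h by (auto simp: cbox_d_def)
  then show "cbox_d d lo hi \<noteq> {}" by blast
qed

lemma obox_empty: "obox_d d lo hi = {} \<longleftrightarrow> (\<exists>i<d. hi i \<le> lo i)"
proof
  assume h: "obox_d d lo hi = {}"
  show "\<exists>i<d. hi i \<le> lo i"
  proof (rule ccontr)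
    assume "\<not> (\<exists>i<d. hi i \<le> lo i)"
    then have "(\<lambda>i. if i < d then (lo i + hi i)/2 else 0) \<in> obox_d d lo hi"
      by (auto simp: obox_d_def)
    with h show False by blast
  qed
next
  assume "\<exists>i<d. hi i \<le> lo i"
  then show "obox_d d lo hi = {}" by (force simp: obox_d_def)
qed

lemma facet_iff:
  assumes d: "0 < d" and le: "\<forall>i<d. lo i \<le> hi i"
  shows "orth_facet_d d (cbox_d d lo hi) \<longleftrightarrow> (lo 0 = hi 0 \<and> (\<forall>i\<in>{1..<d}. lo i < hi i))"
proof
  assume "orth_facet_d d (cbox_d d lo hi)"
  then obtain c a b where ab: "\<forall>i\<in>{1..<d}. a i < b i" and
    S: "cbox_d d lo hi = {x. x 0 = c \<and> (\<forall>i\<in>{1..<d}. a i \<le> x i \<and> x i \<le> b i) \<and> (\<forall>i\<ge>d. x i = 0)}"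
    unfolding orth_facet_d_def by blast
  define p where "p = (\<lambda>i. if i < d then lo i else (0::real))"
  have "p \<in> cbox_d d lo hi" using le by (auto simp: cbox_d_def p_def)
  then have c1: "lo 0 = c" using S d by (auto simp: p_def)
  have "p(0 := hi 0) \<in> cbox_d d lo hi" using le d by (auto simp: cbox_d_def p_def)
  then have c2: "hi 0 = c" using S d by auto
  have "lo i < hi i" if i: "i \<in> {1..<d}" for i
  proof -
    define q1 where "q1 = (\<lambda>m. if m = 0 then c else if m < d then a m else (0::real))"
    define q2 where "q2 = (\<lambda>m. if m = 0 then c else if m < d then b m else (0::real))"
    have "q1 \<in> cbox_d d lo hi" unfolding S using ab d by (auto simp: q1_def less_imp_le)
    then have "lo i \<le> a i" using i by (auto simp: cbox_d_def q1_def)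
    moreover have "q2 \<in> cbox_d d lo hi" unfolding S using ab d by (auto simp: q2_def less_imp_le)
    then have "b i \<le> hi i" using i by (auto simp: cbox_d_def q2_def)
    ultimately show ?thesis using ab i by force
  qed
  then show "lo 0 = hi 0 \<and> (\<forall>i\<in>{1..<d}. lo i < hi i)" using c1 c2 by auto
next
  assume h: "lo 0 = hi 0 \<and> (\<forall>i\<in>{1..<d}. lo i < hi i)"
  have "cbox_d d lo hi = {x. x 0 = lo 0 \<and> (\<forall>i\<in>{1..<d}. lo i \<le> x i \<and> x i \<le> hi i) \<and> (\<forall>i\<ge>d. x i = 0)}"
  proof (intro set_eqI iffI)
    fix x assume "x \<in> cbox_d d lo hi"
    then show "x \<in> {x. x 0 = lo 0 \<and> (\<forall>i\<in>{1..<d}. lo i \<le> x i \<and> x i \<le> hi i) \<and> (\<forall>i\<ge>d. x i = 0)}"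
      using h d by (auto simp: cbox_d_def)
  next
    fix x assume x: "x \<in> {x. x 0 = lo 0 \<and> (\<forall>i\<in>{1..<d}. lo i \<le> x i \<and> x i \<le> hi i) \<and> (\<forall>i\<ge>d. x i = 0)}"
    have "lo i \<le> x i \<and> x i \<le> hi i" if "i < d" for i
    proof (cases "i = 0")
      case True then show ?thesis using x h by auto
    next
      case False then show ?thesis using x that by auto
    qed
    then show "x \<in> cbox_d d lo hi" using x by (auto simp: cbox_d_def)
  qed
  then show "orth_facet_d d (cbox_d d lo hi)" unfolding orth_facet_d_def using h by blast
qed

lemma CBU_iff:
  assumes "0 < d"
  shows "CBU d V E \<longleftrightarrow> simple_graph V E \<and> (\<exists>a b :: nat \<Rightarrow> nat \<Rightarrow> real.
     (\<forall>v\<in>V. \<forall>i<d. a v i < b v i) \<and>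
     (\<forall>u\<in>V. \<forall>v\<in>V. u \<noteq> v \<longrightarrow> (\<exists>i<d. min (b u i) (b v i) \<le> max (a u i) (a v i))) \<and>
     (\<forall>u\<in>V. \<forall>v\<in>V. u \<noteq> v \<longrightarrow> (E u v \<longleftrightarrow> (\<forall>i<d. max (a u i) (a v i) \<le> min (b u i) (b v i)))) \<and>
     (\<forall>u\<in>V. \<forall>v\<in>V. u \<noteq> v \<longrightarrow> (\<forall>i<d. max (a u i) (a v i) \<le> min (b u i) (b v i)) \<longrightarrow>
        (max (a u 0) (a v 0) = min (b u 0) (b v 0) \<and> (\<forall>i\<in>{1..<d}. max (a u i) (a v i) < min (b u i) (b v i)))))"
  unfolding CBU_def cbox_inter obox_inter cbox_ne obox_empty
  using facet_iff[OF assms] by (simp add: cbox_ne)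

lemma part1:
  assumes d: "0 < d" and C: "CBU d V E"
  shows "CBU (Suc d) V E"
proof -
  obtain a b :: "nat \<Rightarrow> nat \<Rightarrow> real" where sg: "simple_graph V E" and
    h1: "\<forall>v\<in>V. \<forall>i<d. a v i < b v i" and
    h2: "\<forall>u\<in>V. \<forall>v\<in>V. u \<noteq> v \<longrightarrow> (\<exists>i<d. min (b u i) (b v i) \<le> max (a u i) (a v i))" and
    h3: "\<forall>u\<in>V. \<forall>v\<in>V. u \<noteq> v \<longrightarrow> (E u v \<longleftrightarrow> (\<forall>i<d. max (a u i) (a v i) \<le> min (b u i) (b v i)))" and
    h4: "\<forall>u\<in>V. \<forall>v\<in>V. u \<noteq> v \<longrightarrow> (\<forall>i<d. max (a u i) (a v i) \<le> min (b u i) (b v i)) \<longrightarrow>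
        (max (a u 0) (a v 0) = min (b u 0) (b v 0) \<and> (\<forall>i\<in>{1..<d}. max (a u i) (a v i) < min (b u i) (b v i)))"
    using C unfolding CBU_iff[OF d] apply (elim conjE exE) apply (rule that) apply assumption+ done
  define a' where "a' = (\<lambda>v. (a v)(d := 0))"
  define b' where "b' = (\<lambda>v. (b v)(d := 1))"
  have lt: "i < Suc d \<longleftrightarrow> i < d \<or> i = d" for i by auto
  have g1: "\<forall>v\<in>V. \<forall>i<Suc d. a' v i < b' v i"
  proof (intro ballI allI impI)
    fix v i assume "v \<in> V" "i < Suc d"
    then consider "i < d" | "i = d" by linarith
    then show "a' v i < b' v i" by cases (use h1 \<open>v \<in> V\<close> in \<open>simp_all add: a'_def b'_def\<close>)
  qed
  have g2: "\<forall>u\<in>V. \<forall>v\<in>V. u \<noteq> v \<longrightarrow> (\<exists>i<Suc d. min (b' u i) (b' v i) \<le> max (a' u i) (a' v i))"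
  proof (intro ballI impI)
    fix u v assume "u \<in> V" "v \<in> V" "u \<noteq> v"
    then obtain i where "i < d" "min (b u i) (b v i) \<le> max (a u i) (a v i)" using h2 by blast
    then show "\<exists>i<Suc d. min (b' u i) (b' v i) \<le> max (a' u i) (a' v i)"
      by (intro exI[of _ i]) (simp add: a'_def b'_def)
  qed
  have eqv: "(\<forall>i<Suc d. max (a' u i) (a' v i) \<le> min (b' u i) (b' v i)) \<longleftrightarrow>
        (\<forall>i<d. max (a u i) (a v i) \<le> min (b u i) (b v i))" for u v
  proof
    assume H: "\<forall>i<Suc d. max (a' u i) (a' v i) \<le> min (b' u i) (b' v i)"
    show "\<forall>i<d. max (a u i) (a v i) \<le> min (b u i) (b v i)"
    proof (intro allI impI)
      fix i assume "i < d"
      then have "i < Suc d" "i \<noteq> d" by auto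
      then show "max (a u i) (a v i) \<le> min (b u i) (b v i)" using H[rule_format, of i] unfolding a'_def b'_def by simp
    qed
  next
    assume H: "\<forall>i<d. max (a u i) (a v i) \<le> min (b u i) (b v i)"
    show "\<forall>i<Suc d. max (a' u i) (a' v i) \<le> min (b' u i) (b' v i)"
    proof (intro allI impI)
      fix i assume "i < Suc d"
      then consider "i < d" | "i = d" by linarith
      then show "max (a' u i) (a' v i) \<le> min (b' u i) (b' v i)"
        by cases (use H in \<open>simp_all add: a'_def b'_def\<close>)
    qed
  qed
  have g3: "\<forall>u\<in>V. \<forall>v\<in>V. u \<noteq> v \<longrightarrow> (E u v \<longleftrightarrow> (\<forall>i<Suc d. max (a' u i) (a' v i) \<le> min (b' u i) (b' v i)))"
    using h3 eqv by blast
  have g4: "\<forall>u\<in>V. \<forall>v\<in>V. u \<noteq> v \<longrightarrow> (\<forall>i<Suc d. max (a' u i) (a' v i) \<le> min (b' u i) (b' v i)) \<longrightarrow>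
        (max (a' u 0) (a' v 0) = min (b' u 0) (b' v 0) \<and> (\<forall>i\<in>{1..<Suc d}. max (a' u i) (a' v i) < min (b' u i) (b' v i)))"
  proof (intro ballI impI)
    fix u v assume uv: "u \<in> V" "v \<in> V" "u \<noteq> v" and
      m: "\<forall>i<Suc d. max (a' u i) (a' v i) \<le> min (b' u i) (b' v i)"
    then have "\<forall>i<d. max (a u i) (a v i) \<le> min (b u i) (b v i)" using eqv by blast
    then have k: "max (a u 0) (a v 0) = min (b u 0) (b v 0) \<and> (\<forall>i\<in>{1..<d}. max (a u i) (a v i) < min (b u i) (b v i))"
      using h4 uv by blast
    have "max (a' u i) (a' v i) < min (b' u i) (b' v i)" if "i \<in> {1..<Suc d}" for i
    proof (cases "i = d")
      case True then show ?thesis by (simp add: a'_def b'_def)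
    next
      case False then show ?thesis using k that by (simp add: a'_def b'_def)
    qed
    then show "max (a' u 0) (a' v 0) = min (b' u 0) (b' v 0) \<and> (\<forall>i\<in>{1..<Suc d}. max (a' u i) (a' v i) < min (b' u i) (b' v i))"
      using k d by (simp add: a'_def b'_def)
  qed
  have "simple_graph V E \<and> (\<exists>a b :: nat \<Rightarrow> nat \<Rightarrow> real.
     (\<forall>v\<in>V. \<forall>i<Suc d. a v i < b v i) \<and>
     (\<forall>u\<in>V. \<forall>v\<in>V. u \<noteq> v \<longrightarrow> (\<exists>i<Suc d. min (b u i) (b v i) \<le> max (a u i) (a v i))) \<and>
     (\<forall>u\<in>V. \<forall>v\<in>V. u \<noteq> v \<longrightarrow> (E u v \<longleftrightarrow> (\<forall>i<Suc d. max (a u i) (a v i) \<le> min (b u i) (b v i)))) \<and>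
     (\<forall>u\<in>V. \<forall>v\<in>V. u \<noteq> v \<longrightarrow> (\<forall>i<Suc d. max (a u i) (a v i) \<le> min (b u i) (b v i)) \<longrightarrow>
        (max (a u 0) (a v 0) = min (b u 0) (b v 0) \<and> (\<forall>i\<in>{1..<Suc d}. max (a u i) (a v i) < min (b u i) (b v i)))))"
    apply (rule conjI[OF sg])
    apply (rule exI[of _ a'], rule exI[of _ b'])
    using g1 g2 g3 g4 by (intro conjI)
  then show ?thesis using CBU_iff[OF zero_less_Suc] by (rule iffD2[rotated])
qed


lemma CBU_build:
  fixes lo hi :: "nat \<Rightarrow> nat \<Rightarrow> real"
  assumes D: "0 < D" and sg: "simple_graph V E"
    and pos: "\<And>v i. v \<in> V \<Longrightarrow> i < D \<Longrightarrow> lo v i < hi v i"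
    and edge: "\<And>u v. u \<in> V \<Longrightarrow> v \<in> V \<Longrightarrow> E u v \<Longrightarrow>
        (hi u 0 = lo v 0 \<or> hi v 0 = lo u 0) \<and> (\<forall>j\<in>{1..<D}. max (lo u j) (lo v j) < min (hi u j) (hi v j))"
    and sep: "\<And>u v. u \<in> V \<Longrightarrow> v \<in> V \<Longrightarrow> u \<noteq> v \<Longrightarrow> \<not> E u v \<Longrightarrow>
        \<exists>j<D. hi u j < lo v j \<or> hi v j < lo u j"
  shows "CBU D V E"
proof -
  have ov: "(\<forall>i<D. max (lo u i) (lo v i) \<le> min (hi u i) (hi v i))" if "u \<in> V" "v \<in> V" "E u v" for u v
  proof (intro allI impI)
    fix i assume i: "i < D"
    have pu: "lo u i < hi u i" and pv: "lo v i < hi v i" using pos that i by auto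
    show "max (lo u i) (lo v i) \<le> min (hi u i) (hi v i)"
    proof (cases "i = 0")
      case True then show ?thesis using edge[OF that] pu pv by auto
    next
      case False then have "i \<in> {1..<D}" using i by auto
      then show ?thesis using edge[OF that] by force
    qed
  qed
  have g2: "\<forall>u\<in>V. \<forall>v\<in>V. u \<noteq> v \<longrightarrow> (\<exists>i<D. min (hi u i) (hi v i) \<le> max (lo u i) (lo v i))"
  proof (intro ballI impI)
    fix u v assume uv: "u \<in> V" "v \<in> V" "u \<noteq> v"
    show "\<exists>i<D. min (hi u i) (hi v i) \<le> max (lo u i) (lo v i)"
    proof (cases "E u v")
      case True then show ?thesis using edge[OF uv(1,2) True] D by (intro exI[of _ 0]) auto
    next
      case False then obtain j where "j < D" "hi u j < lo v j \<or> hi v j < lo u j" using sep uv by blast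
      then show ?thesis by (intro exI[of _ j]) auto
    qed
  qed
  have g3: "\<forall>u\<in>V. \<forall>v\<in>V. u \<noteq> v \<longrightarrow> (E u v \<longleftrightarrow> (\<forall>i<D. max (lo u i) (lo v i) \<le> min (hi u i) (hi v i)))"
  proof (intro ballI impI iffI)
    fix u v assume uv: "u \<in> V" "v \<in> V" "u \<noteq> v" and "E u v"
    then show "\<forall>i<D. max (lo u i) (lo v i) \<le> min (hi u i) (hi v i)" using ov by blast
  next
    fix u v assume uv: "u \<in> V" "v \<in> V" "u \<noteq> v" and H: "\<forall>i<D. max (lo u i) (lo v i) \<le> min (hi u i) (hi v i)"
    show "E u v"
    proof (rule ccontr)
      assume "\<not> E u v"
      then obtain j where "j < D" "hi u j < lo v j \<or> hi v j < lo u j" using sep uv by blast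
      with H[rule_format, of j] show False by auto
    qed
  qed
  have g4: "\<forall>u\<in>V. \<forall>v\<in>V. u \<noteq> v \<longrightarrow> (\<forall>i<D. max (lo u i) (lo v i) \<le> min (hi u i) (hi v i)) \<longrightarrow>
        (max (lo u 0) (lo v 0) = min (hi u 0) (hi v 0) \<and> (\<forall>i\<in>{1..<D}. max (lo u i) (lo v i) < min (hi u i) (hi v i)))"
  proof (intro ballI impI)
    fix u v assume uv: "u \<in> V" "v \<in> V" "u \<noteq> v" and H: "\<forall>i<D. max (lo u i) (lo v i) \<le> min (hi u i) (hi v i)"
    then have E: "E u v" using g3 by blast
    have pu: "lo u 0 < hi u 0" and pv: "lo v 0 < hi v 0" using pos uv D by auto
    show "max (lo u 0) (lo v 0) = min (hi u 0) (hi v 0) \<and> (\<forall>i\<in>{1..<D}. max (lo u i) (lo v i) < min (hi u i) (hi v i))"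
      using edge[OF uv(1,2) E] pu pv by auto
  qed
  have "simple_graph V E \<and> (\<exists>a b :: nat \<Rightarrow> nat \<Rightarrow> real.
     (\<forall>v\<in>V. \<forall>i<D. a v i < b v i) \<and>
     (\<forall>u\<in>V. \<forall>v\<in>V. u \<noteq> v \<longrightarrow> (\<exists>i<D. min (b u i) (b v i) \<le> max (a u i) (a v i))) \<and>
     (\<forall>u\<in>V. \<forall>v\<in>V. u \<noteq> v \<longrightarrow> (E u v \<longleftrightarrow> (\<forall>i<D. max (a u i) (a v i) \<le> min (b u i) (b v i)))) \<and>
     (\<forall>u\<in>V. \<forall>v\<in>V. u \<noteq> v \<longrightarrow> (\<forall>i<D. max (a u i) (a v i) \<le> min (b u i) (b v i)) \<longrightarrow>
        (max (a u 0) (a v 0) = min (b u 0) (b v 0) \<and> (\<forall>i\<in>{1..<D}. max (a u i) (a v i) < min (b u i) (b v i)))))"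
    apply (rule conjI[OF sg])
    apply (rule exI[of _ lo], rule exI[of _ hi])
    using pos g2 g3 g4 by (intro conjI) auto
  then show ?thesis using CBU_iff[OF D] by (rule iffD2[rotated])
qed

definition crownE :: "nat \<Rightarrow> nat \<Rightarrow> nat \<Rightarrow> bool" where
  "crownE n u v \<longleftrightarrow> (u < n \<and> n \<le> v \<and> v < 2*n \<and> v \<noteq> u + n) \<or> (v < n \<and> n \<le> u \<and> u < 2*n \<and> u \<noteq> v + n)"

lemma crown_simple: "simple_graph {..<2*n} (crownE n)"
  unfolding simple_graph_def crownE_def by auto

lemma lower:
  assumes d: "0 < d"
  shows "\<not> CBU d {..<2*(2*d+1)} (crownE (2*d+1))"
proof
  let ?n = "2*d+1"
  let ?V = "{..<2*?n}"
  assume "CBU d ?V (crownE ?n)"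
  then obtain a b :: "nat \<Rightarrow> nat \<Rightarrow> real" where
    h1: "\<forall>v\<in>?V. \<forall>i<d. a v i < b v i" and
    h3: "\<forall>u\<in>?V. \<forall>v\<in>?V. u \<noteq> v \<longrightarrow> (crownE ?n u v \<longleftrightarrow> (\<forall>i<d. max (a u i) (a v i) \<le> min (b u i) (b v i)))"
    unfolding CBU_iff[OF d] apply (elim conjE exE) apply (rule that) apply assumption+ done
  have ex: "\<exists>j<d. b i j < a (i+?n) j \<or> b (i+?n) j < a i j" if i: "i < ?n" for i
  proof (rule ccontr)
    assume nex: "\<not> ?thesis"
    have "\<forall>j<d. max (a i j) (a (i+?n) j) \<le> min (b i j) (b (i+?n) j)"
    proof (intro allI impI)
      fix j assume j: "j < d"
      then have "a i j < b i j" "a (i+?n) j < b (i+?n) j" using h1 i by auto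
      then show "max (a i j) (a (i+?n) j) \<le> min (b i j) (b (i+?n) j)" using nex j by auto
    qed
    then have "crownE ?n i (i+?n)" using h3 i by auto
    then show False unfolding crownE_def by auto
  qed
  define c where "c i = (SOME j. j < d \<and> (b i j < a (i+?n) j \<or> b (i+?n) j < a i j))" for i
  have c: "c i < d \<and> (b i (c i) < a (i+?n) (c i) \<or> b (i+?n) (c i) < a i (c i))" if "i < ?n" for i
    unfolding c_def using someI_ex[OF ex[OF that]] .
  define f where "f i = 2 * c i + (if b i (c i) < a (i+?n) (c i) then 1 else 0)" for i
  have "f ` {..<?n} \<subseteq> {..<2*d}"
  proof
    fix x assume "x \<in> f ` {..<?n}"
    then obtain i where "i < ?n" "x = f i" by auto
    then show "x \<in> {..<2*d}" using c[of i] by (auto simp: f_def)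
  qed
  then have "card (f ` {..<?n}) \<le> 2*d" by (metis card_lessThan card_mono finite_lessThan)
  then have "\<not> inj_on f {..<?n}" by (intro pigeonhole) auto
  then obtain i k where ik: "i < ?n" "k < ?n" "i \<noteq> k" "f i = f k" unfolding inj_on_def by auto
  define j where "j = c i"
  have pe: "\<And>x y p q. 2 * x + (if p then 1 else 0) = 2 * (y::nat) + (if q then 1 else 0) \<Longrightarrow> x = y \<and> (p \<longleftrightarrow> q)"
    by (auto split: if_splits) presburger+
  have "c i = c k \<and> ((b i (c i) < a (i+?n) (c i)) \<longleftrightarrow> (b k (c k) < a (k+?n) (c k)))"
    by (rule pe) (use ik(4) in \<open>simp add: f_def\<close>)
  then have cj: "c k = j" and oeq: "(b i j < a (i+?n) j) \<longleftrightarrow> (b k j < a (k+?n) j)"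
    unfolding j_def by auto
  have jd: "j < d" using c[OF ik(1)] j_def by auto
  have e1: "crownE ?n i (k+?n)" and e2: "crownE ?n k (i+?n)" using ik unfolding crownE_def by auto
  have m1: "max (a i j) (a (k+?n) j) \<le> min (b i j) (b (k+?n) j)" using h3 e1 ik jd by auto
  have m2: "max (a k j) (a (i+?n) j) \<le> min (b k j) (b (i+?n) j)" using h3 e2 ik jd by auto
  have ci: "b i j < a (i+?n) j \<or> b (i+?n) j < a i j" using c[OF ik(1)] j_def by auto
  have ck: "b k j < a (k+?n) j \<or> b (k+?n) j < a k j" using c[OF ik(2)] cj by auto
  have m1': "a (k+?n) j \<le> b i j" "a i j \<le> b (k+?n) j" using m1 by auto
  have m2': "a (i+?n) j \<le> b k j" "a k j \<le> b (i+?n) j" using m2 by auto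
  show False
  proof (cases "b i j < a (i+?n) j")
    case True then show False using oeq m1' m2' by linarith
  next
    case False then show False using oeq ci ck m1' m2' by linarith
  qed
qed


definition loA :: "nat \<Rightarrow> nat \<Rightarrow> nat \<Rightarrow> real" where
  "loA d i j = (if j = 0 then (if i = 2*d then 2 else 0)
     else if i = 2*d then 0
     else if j = 1 then (if i < 2 then (if even i then 0 else 20 + 4 * real d) else 10 + 2 * real i)
     else (if i div 2 + 1 = j then (if even i then 10 else 0) else 0))"

definition hiA :: "nat \<Rightarrow> nat \<Rightarrow> nat \<Rightarrow> real" where
  "hiA d i j = (if j = 0 then (if i = 2*d then 3 else 1)
     else if i = 2*d then 30 + 4 * real d
     else if j = 1 then (if i < 2 then (if even i then 5 else 25 + 4 * real d) else 11 + 2 * real i)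
     else (if i div 2 + 1 = j then (if even i then 30 + 4 * real d else 9 + 4 * real d) else 30 + 4 * real d))"

definition loB :: "nat \<Rightarrow> nat \<Rightarrow> nat \<Rightarrow> real" where
  "loB d k j = (if j = 0 then (if k = 2*d then -1 else 1)
     else if k = 2*d then 0
     else if j = 1 then (if k < 2 then (if even k then 14 else 0) else 0)
     else (if k div 2 + 1 = j then (if even k then 0 else 20 + 4 * real d) else 10 + 2 * real k))"

definition hiB :: "nat \<Rightarrow> nat \<Rightarrow> nat \<Rightarrow> real" where
  "hiB d k j = (if j = 0 then (if k = 2*d then 0 else 2)
     else if k = 2*d then 30 + 4 * real d
     else if j = 1 then (if k < 2 then (if even k then 30 + 4 * real d else 9 + 4 * real d) else 30 + 4 * real d)
     else (if k div 2 + 1 = j then (if even k then 5 else 25 + 4 * real d) else 11 + 2 * real k))"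

lemma bnd: "i < 2*d \<Longrightarrow> 11 + 2 * real i \<le> 9 + 4 * real d"
proof -
  assume "i < 2*d" then have "i + 1 \<le> 2*d" by auto
  then have "real (i + 1) \<le> real (2*d)" by (simp only: of_nat_le_iff)
  then show ?thesis by simp
qed

lemma par: "i div 2 = k div 2 \<Longrightarrow> (even i \<longleftrightarrow> even (k::nat)) \<Longrightarrow> i = k"
  by presburger

lemma posA: "loA d i j < hiA d i j"
  unfolding loA_def hiA_def by auto

lemma posB: "loB d k j < hiB d k j"
  unfolding loB_def hiB_def by auto


lemma edgeAB:
  assumes "i \<le> 2*d" "k \<le> 2*d" "i \<noteq> k" "1 \<le> j" "j \<le> d"
  shows "loA d i j < hiB d k j \<and> loB d k j < hiA d i j"
proof -
  have np: "i div 2 = k div 2 \<Longrightarrow> (even i \<longleftrightarrow> \<not> even k)" using par assms(3) by blast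
  have bi: "i \<noteq> 2*d \<Longrightarrow> 11 + 2 * real i \<le> 9 + 4 * real d" using bnd[of i d] assms by auto
  have bk: "k \<noteq> 2*d \<Longrightarrow> 11 + 2 * real k \<le> 9 + 4 * real d" using bnd[of k d] assms by auto
  have gi: "\<not> i < 2 \<Longrightarrow> 2 \<le> real i" and gk: "\<not> k < 2 \<Longrightarrow> 2 \<le> real k" by auto
  have z: "i < 2 \<Longrightarrow> k < 2 \<Longrightarrow> i div 2 = k div 2" by auto
  have nn: "0 \<le> real i" "0 \<le> real k" "0 \<le> real d" by auto
  show ?thesis
    unfolding loA_def hiA_def loB_def hiB_def
    using assms np bi bk gi gk z nn by (auto split: if_splits)
qed

lemma sepAA:
  assumes "i \<le> 2*d" "k \<le> 2*d" "i \<noteq> k" "1 \<le> d"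
  shows "\<exists>j<Suc d. hiA d i j < loA d k j \<or> hiA d k j < loA d i j"
proof (cases "i = 2*d \<or> k = 2*d")
  case True then show ?thesis using assms by (intro exI[of _ 0]) (auto simp: loA_def hiA_def)
next
  case False
  have bi: "11 + 2 * real i \<le> 9 + 4 * real d" using bnd[of i d] assms False by auto
  have bk: "11 + 2 * real k \<le> 9 + 4 * real d" using bnd[of k d] assms False by auto
  have gi: "\<not> i < 2 \<Longrightarrow> 2 \<le> real i" and gk: "\<not> k < 2 \<Longrightarrow> 2 \<le> real k" by auto
  have ik: "i < k \<Longrightarrow> real i + 1 \<le> real k" "k < i \<Longrightarrow> real k + 1 \<le> real i" by auto
  have pp: "i < 2 \<Longrightarrow> k < 2 \<Longrightarrow> (even i \<longleftrightarrow> \<not> even k)" using assms(3) by presburger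
  have "hiA d i 1 < loA d k 1 \<or> hiA d k 1 < loA d i 1"
    unfolding loA_def hiA_def using False bi bk gi gk ik pp assms(3) by (cases "i < k") auto
  then show ?thesis using assms by (intro exI[of _ 1]) auto
qed

lemma sepBB:
  assumes "i \<le> 2*d" "k \<le> 2*d" "i \<noteq> k" "1 \<le> d"
  shows "\<exists>j<Suc d. hiB d i j < loB d k j \<or> hiB d k j < loB d i j"
proof (cases "i = 2*d \<or> k = 2*d")
  case True then show ?thesis using assms by (intro exI[of _ 0]) (auto simp: loB_def hiB_def)
next
  case False
  show ?thesis
  proof (cases "d = 1")
    case True
    then have "i < 2" "k < 2" using False assms by auto
    then have "(i = 0 \<and> k = 1) \<or> (i = 1 \<and> k = 0)" using assms(3) by auto
    then have "hiB d i 1 < loB d k 1 \<or> hiB d k 1 < loB d i 1"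
      unfolding loB_def hiB_def using True by auto
    then show ?thesis using True by (intro exI[of _ 1]) auto
  next
    case d2: False
    have bi: "11 + 2 * real i \<le> 9 + 4 * real d" using bnd[of i d] assms False by auto
    have bk: "11 + 2 * real k \<le> 9 + 4 * real d" using bnd[of k d] assms False by auto
    have ik: "i < k \<Longrightarrow> real i + 1 \<le> real k" "k < i \<Longrightarrow> real k + 1 \<le> real i" by auto
    have pp: "i div 2 = 1 \<Longrightarrow> k div 2 = 1 \<Longrightarrow> (even i \<longleftrightarrow> \<not> even k)" using assms(3) by presburger
    have nn: "0 \<le> real i" "0 \<le> real k" "0 \<le> real d" by auto
    have "hiB d i 2 < loB d k 2 \<or> hiB d k 2 < loB d i 2"
      unfolding loB_def hiB_def using False bi bk ik pp nn assms(3) by (auto simp: not_less_iff_gr_or_eq)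
    then show ?thesis using assms d2 by (intro exI[of _ 2]) auto
  qed
qed

lemma sepAB:
  assumes "i \<le> 2*d" "1 \<le> d"
  shows "\<exists>j<Suc d. hiA d i j < loB d i j \<or> hiB d i j < loA d i j"
proof (cases "i = 2*d")
  case True then show ?thesis using assms by (intro exI[of _ 0]) (auto simp: loA_def hiA_def loB_def hiB_def)
next
  case False
  have bi: "11 + 2 * real i \<le> 9 + 4 * real d" using bnd[of i d] assms False by auto
  have nn: "0 \<le> real i" "0 \<le> real d" by auto
  have jd: "i div 2 + 1 < Suc d" using assms False by auto
  have "hiA d i (i div 2 + 1) < loB d i (i div 2 + 1) \<or> hiB d i (i div 2 + 1) < loA d i (i div 2 + 1)"
    unfolding loA_def hiA_def loB_def hiB_def using False bi nn by auto
  then show ?thesis using jd by blast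
qed


definition vlo :: "nat \<Rightarrow> nat \<Rightarrow> nat \<Rightarrow> real" where
  "vlo d v j = (if v < 2*d+1 then loA d v j else loB d (v - (2*d+1)) j)"
definition vhi :: "nat \<Rightarrow> nat \<Rightarrow> nat \<Rightarrow> real" where
  "vhi d v j = (if v < 2*d+1 then hiA d v j else hiB d (v - (2*d+1)) j)"

lemma touch: "i \<le> 2*d \<Longrightarrow> k \<le> 2*d \<Longrightarrow> i \<noteq> k \<Longrightarrow> hiA d i 0 = loB d k 0 \<or> hiB d k 0 = loA d i 0"
  unfolding loA_def hiA_def loB_def hiB_def by auto

lemma edge_ik:
  assumes "i \<le> 2*d" "k \<le> 2*d" "i \<noteq> k"
  shows "(hiA d i 0 = loB d k 0 \<or> hiB d k 0 = loA d i 0) \<and>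
    (\<forall>j\<in>{1..<Suc d}. max (loA d i j) (loB d k j) < min (hiA d i j) (hiB d k j))"
proof -
  have "max (loA d i j) (loB d k j) < min (hiA d i j) (hiB d k j)" if "j \<in> {1..<Suc d}" for j
    using edgeAB[OF assms, of j] posA[of d i j] posB[of d k j] that by auto
  then show ?thesis using touch[OF assms] by blast
qed

lemma upper:
  assumes d: "1 \<le> d"
  shows "CBU (Suc d) {..<2*(2*d+1)} (crownE (2*d+1))"
proof (rule CBU_build[where lo = "vlo d" and hi = "vhi d"])
  show "simple_graph {..<2*(2*d+1)} (crownE (2*d+1))" by (rule crown_simple)
  show "0 < Suc d" by simp
  show "vlo d v i < vhi d v i" for v i
    unfolding vlo_def vhi_def using posA posB by auto
next
  fix u v assume uv: "u \<in> {..<2*(2*d+1)}" "v \<in> {..<2*(2*d+1)}" and E: "crownE (2*d+1) u v"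
  show "(vhi d u 0 = vlo d v 0 \<or> vhi d v 0 = vlo d u 0) \<and>
        (\<forall>j\<in>{1..<Suc d}. max (vlo d u j) (vlo d v j) < min (vhi d u j) (vhi d v j))"
  proof (cases "u < 2*d+1")
    case True
    then have v: "2*d+1 \<le> v" "v - (2*d+1) \<le> 2*d" "u \<noteq> v - (2*d+1)" using E uv unfolding crownE_def by auto
    show ?thesis using edge_ik[OF _ v(2) v(3), of ] True v(1) unfolding vlo_def vhi_def by auto
  next
    case False
    then have v: "v < 2*d+1" "u - (2*d+1) \<le> 2*d" "v \<noteq> u - (2*d+1)" using E uv unfolding crownE_def by auto
    have e: "(hiA d v 0 = loB d (u - (2*d+1)) 0 \<or> hiB d (u - (2*d+1)) 0 = loA d v 0) \<and>
      (\<forall>j\<in>{1..<Suc d}. max (loA d v j) (loB d (u - (2*d+1)) j) < min (hiA d v j) (hiB d (u - (2*d+1)) j))"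
      using edge_ik[OF _ v(2) v(3)] v(1) by auto
    show ?thesis using e False v(1) unfolding vlo_def vhi_def by (auto simp: max.commute min.commute)
  qed
next
  fix u v assume uv: "u \<in> {..<2*(2*d+1)}" "v \<in> {..<2*(2*d+1)}" "u \<noteq> v" and nE: "\<not> crownE (2*d+1) u v"
  show "\<exists>j<Suc d. vhi d u j < vlo d v j \<or> vhi d v j < vlo d u j"
  proof (cases "u < 2*d+1")
    case u: True
    show ?thesis
    proof (cases "v < 2*d+1")
      case True then show ?thesis using sepAA[of u d v] u uv d unfolding vlo_def vhi_def by auto
    next
      case False
      then have "v = u + (2*d+1)" using nE uv u unfolding crownE_def by auto
      then show ?thesis using sepAB[of u d] u d unfolding vlo_def vhi_def by auto
    qed
  next
    case u: False
    show ?thesis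
    proof (cases "v < 2*d+1")
      case True
      then have "u = v + (2*d+1)" using nE uv u unfolding crownE_def by auto
      then show ?thesis using sepAB[of v d] True d unfolding vlo_def vhi_def by auto
    next
      case False
      have "u - (2*d+1) \<noteq> v - (2*d+1)" using u False uv by auto
      then show ?thesis using sepBB[of "u - (2*d+1)" d "v - (2*d+1)"] u False uv d unfolding vlo_def vhi_def by auto
    qed
  qed
qed

theorem mainTheorem7:
  fixes d :: nat
  assumes "d \<ge> 1"
  shows "(\<forall>V E. CBU d V E \<longrightarrow> CBU (Suc d) V E) \<and>
         (\<exists>V E. CBU (Suc d) V E \<and> \<not> CBU d V E)"
proof
  show "\<forall>V E. CBU d V E \<longrightarrow> CBU (Suc d) V E" using part1 assms by auto
  show "\<exists>V E. CBU (Suc d) V E \<and> \<not> CBU d V E"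
    using upper[OF assms] lower[of d] assms by auto
qed

end
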